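(* Let $f\in\mathbb Z[X]$ be a reciprocal Salem polynomial, and let $g\in\mathbb Z[X]$ have degree less than $\deg f$ and be such that $f+g$ is reciprocal. For $\epsilon\in\mathbb R$ set $f_\epsilon=f+\epsilon g\in\mathbb R[X]$. Let $k\in\mathbb N$ be such that $f_\epsilon$ has only simple roots for all $\epsilon\in[0,k]$. Then $f_k$ is a reciprocal Salem polynomial.
   Context: A polynomial $f=f_0+\dots+f_nX^n$ ($f_n\ne0$) is reciprocal if $f_i=f_{n-i}$ for all $i$. A Salem polynomial is a monic $f\in\mathbb Z[X]$ having exactly one root $\lambda$ with $|\lambda|>1$, this root being simple. *)

theory Defs
  imports "HOL-Computational_Algebra.Polynomial" Complex_Main
begin

definition reciprocal :: "'a::zero poly \<Rightarrow> bool" where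
  "reciprocal p \<longleftrightarrow> p \<noteq> 0 \<and> (\<forall>i\<le>degree p. coeff p i = coeff p (degree p - i))"

definition salem_poly :: "int poly \<Rightarrow> bool" where
  "salem_poly f \<longleftrightarrow> lead_coeff f = 1 \<and>
     (\<exists>!z::complex. poly (map_poly of_int f) z = 0 \<and> cmod z > 1) \<and>
     (\<forall>z::complex. poly (map_poly of_int f) z = 0 \<and> cmod z > 1
        \<longrightarrow> order z (map_poly of_int f) = 1)"

definition only_simple_roots :: "real poly \<Rightarrow> bool" where
  "only_simple_roots p \<longleftrightarrow> p \<noteq> 0 \<and>
     (\<forall>z::complex. poly (map_poly of_real p) z = 0 \<longrightarrow> order z (map_poly of_real p) = 1)"

end

theory Submission
  imports Defs "HOL-Computational_Algebra.Fundamental_Theorem_Algebra"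
begin

lemma card_roots_rsq:
  fixes p :: "complex poly"
  assumes "rsquarefree p"
  shows "card {z. poly p z = 0} = degree p"
proof -
  have p0: "p \<noteq> 0" using assms by (simp add: rsquarefree_def)
  have "degree p = degree (smult (lead_coeff p) (\<Prod>z|poly p z = 0. [:-z, 1:]))"
    using complex_poly_decompose_rsquarefree[OF assms] by simp
  also have "\<dots> = degree (\<Prod>z|poly p z = 0. [:-z, 1:])" using p0 by simp
  also have "\<dots> = (\<Sum>z|poly p z = 0. degree [:-z, 1:])"
    by (rule degree_prod_eq_sum_degree) auto
  also have "\<dots> = card {z. poly p z = 0}" by simp
  finally show ?thesis by simp
qed

lemma monic_lower_bound:
  fixes p :: "complex poly"
  assumes "lead_coeff p = 1" "\<And>w. poly p w = 0 \<Longrightarrow> d \<le> cmod (z - w)" "0 \<le> d"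
  shows "d ^ degree p \<le> cmod (poly p z)"
proof -
  obtain r where r: "smult (lead_coeff p) (\<Prod>i<degree p. [:-r i, 1:]) = p"
    by (rule complex_poly_decompose')
  hence pe: "p = (\<Prod>i<degree p. [:-r i, 1:])" using assms(1) by simp
  have roots: "poly p (r i) = 0" if "i < degree p" for i
  proof -
    have "poly p (r i) = (\<Prod>j<degree p. r i - r j)" by (subst pe) (simp add: poly_prod)
    also have "\<dots> = 0" using that by (intro prod_zero) auto
    finally show ?thesis .
  qed
  have "cmod (poly p z) = (\<Prod>i<degree p. cmod (z - r i))"
    by (subst pe) (simp add: poly_prod prod_norm)
  also have "\<dots> \<ge> (\<Prod>i<degree p. d)"
    by (intro prod_mono) (use assms roots in auto)
  finally show ?thesis by simp
qed

definition PP :: "int poly \<Rightarrow> int poly \<Rightarrow> real \<Rightarrow> complex poly" where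
  "PP f g e = map_poly of_int f + smult (of_real e) (map_poly of_int g)"

lemma coeff_PP: "coeff (PP f g e) i = of_int (coeff f i) + of_real e * of_int (coeff g i)"
  by (simp add: PP_def coeff_map_poly)

lemma PP_real: "map_poly of_real (map_poly of_int f + smult e (map_poly of_int g)) = PP f g e"
  by (rule poly_eqI) (simp add: coeff_PP coeff_map_poly)

lemma PP_int: "map_poly of_int (f + smult (int k) g) = PP f g (real k)"
  by (rule poly_eqI) (simp add: coeff_PP coeff_map_poly)

lemma g_sym:
  fixes f g :: "int poly"
  assumes "reciprocal f" "degree g < degree f" "reciprocal (f + g)" "i \<le> degree f"
  shows "coeff g i = coeff g (degree f - i)"
proof -
  have d: "degree (f + g) = degree f" using assms(2) by (rule degree_add_eq_right[THEN sym, THEN sym] degree_add_eq_left)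
  have "coeff (f+g) i = coeff (f+g) (degree f - i)" using assms(3,4) d unfolding reciprocal_def by metis
  moreover have "coeff f i = coeff f (degree f - i)" using assms(1,4) unfolding reciprocal_def by metis
  ultimately show ?thesis by simp
qed

lemma PP_degree:
  assumes "lead_coeff f = 1" "degree g < degree f"
  shows "degree (PP f g e) = degree f" "lead_coeff (PP f g e) = 1"
proof -
  have c: "coeff (PP f g e) (degree f) = 1" using assms by (simp add: coeff_PP coeff_eq_0)
  have "degree (PP f g e) \<le> degree f"
    by (rule degree_le) (use assms in \<open>auto simp: coeff_PP coeff_eq_0\<close>)
  moreover have "degree f \<le> degree (PP f g e)" using c by (intro le_degree) simp
  ultimately show "degree (PP f g e) = degree f" by simp
  thus "lead_coeff (PP f g e) = 1" using c by simp
qed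

lemma PP_sym:
  assumes "reciprocal f" "degree g < degree f" "reciprocal (f + g)" "i \<le> degree f"
  shows "coeff (PP f g e) i = coeff (PP f g e) (degree f - i)"
  using g_sym[OF assms] assms(1,4) unfolding reciprocal_def coeff_PP by metis

lemma PP_reflect:
  assumes "reciprocal f" "degree g < degree f" "reciprocal (f + g)" "lead_coeff f = 1"
  shows "reflect_poly (PP f g e) = PP f g e"
proof (rule poly_eqI)
  fix i
  show "coeff (reflect_poly (PP f g e)) i = coeff (PP f g e) i"
    using PP_sym[OF assms(1-3), of "degree f - i" e] PP_sym[OF assms(1-3), of i e] PP_degree[OF assms(4,2)]
    by (auto simp: coeff_reflect_poly coeff_eq_0)
qed

lemma PP_cnj: "poly (PP f g e) (cnj z) = cnj (poly (PP f g e) z)"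
proof -
  have "map_poly cnj (PP f g e) = PP f g e"
    by (rule poly_eqI) (simp add: coeff_map_poly coeff_PP)
  thus ?thesis using poly_cnj[of "PP f g e" z] by simp
qed

lemma PP_0:
  assumes "reciprocal f" "degree g < degree f" "reciprocal (f + g)" "lead_coeff f = 1"
  shows "poly (PP f g e) 0 = 1"
  using PP_sym[OF assms(1-3), of 0 e] PP_degree[OF assms(4,2), of e]
  by (simp add: poly_0_coeff_0)

lemma PP_refl_root:
  assumes "reciprocal f" "degree g < degree f" "reciprocal (f + g)" "lead_coeff f = 1"
    and "poly (PP f g e) z = 0"
  shows "z \<noteq> 0" "poly (PP f g e) (inverse (cnj z)) = 0"
proof -
  show z0: "z \<noteq> 0" using PP_0[OF assms(1-4)] assms(5) by auto
  have "poly (reflect_poly (PP f g e)) (cnj z) = cnj z ^ degree (PP f g e) * poly (PP f g e) (inverse (cnj z))"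
    using z0 by (intro poly_reflect_poly_nz) simp
  hence "cnj z ^ degree (PP f g e) * poly (PP f g e) (inverse (cnj z)) = 0"
    using PP_reflect[OF assms(1-4)] PP_cnj assms(5) by simp
  thus "poly (PP f g e) (inverse (cnj z)) = 0" using z0 by simp
qed

lemma PP_diff: "poly (PP f g e) z = poly (PP f g e0) z + of_real (e - e0) * poly (map_poly of_int g) z"
  by (simp add: PP_def algebra_simps)

lemma near_root:
  fixes f g :: "int poly"
  assumes "lead_coeff f = 1" "degree g < degree f" "poly (PP f g e0) z0 = 0" "\<delta> > 0"
  shows "eventually (\<lambda>e. \<exists>w. poly (PP f g e) w = 0 \<and> cmod (w - z0) < \<delta>) (at e0 within S)"
proof -
  define c where "c = poly (map_poly of_int g) z0"
  have "((\<lambda>e. cmod (of_real (e - e0) * c)) \<longlongrightarrow> cmod (of_real (e0 - e0) * c)) (at e0 within S)"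
    by (intro tendsto_intros)
  hence "((\<lambda>e. cmod (of_real (e - e0) * c)) \<longlongrightarrow> 0) (at e0 within S)" by simp
  hence ev: "eventually (\<lambda>e. cmod (of_real (e - e0) * c) < \<delta> ^ degree f) (at e0 within S)"
    by (rule order_tendstoD) (use assms in simp)
  show ?thesis
  proof (rule eventually_mono[OF ev])
    fix e assume h: "cmod (of_real (e - e0) * c) < \<delta> ^ degree f"
    show "\<exists>w. poly (PP f g e) w = 0 \<and> cmod (w - z0) < \<delta>"
    proof (rule ccontr)
      assume "\<not> ?thesis"
      hence "\<And>w. poly (PP f g e) w = 0 \<Longrightarrow> \<delta> \<le> cmod (z0 - w)"
        by (metis not_less norm_minus_commute)
      hence "\<delta> ^ degree (PP f g e) \<le> cmod (poly (PP f g e) z0)"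
        using monic_lower_bound[of "PP f g e" \<delta> z0] PP_degree[OF assms(1,2)] assms(4) by simp
      also have "poly (PP f g e) z0 = of_real (e - e0) * c"
        using PP_diff[of f g e z0 e0] assms(3) by (simp add: c_def)
      finally show False using h PP_degree[OF assms(1,2)] by simp
    qed
  qed
qed

lemma ev_small: "(c::real) > 0 \<Longrightarrow> eventually (\<lambda>\<delta>. \<delta> < c) (at_right 0)"
  unfolding eventually_at_right_field by (intro exI[of _ c]) auto

lemma ev_small_imp: "(P \<Longrightarrow> (c::real) > 0) \<Longrightarrow> eventually (\<lambda>\<delta>. P \<longrightarrow> \<delta> < c) (at_right 0)"
  by (cases P) (auto intro: ev_small)

lemma local_const:
  fixes f g :: "int poly"
  assumes "reciprocal f" "degree g < degree f" "reciprocal (f + g)" "lead_coeff f = 1"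
    and simple: "\<forall>e\<in>S. rsquarefree (PP f g e)" and e0S: "e0 \<in> S"
  shows "eventually (\<lambda>e. card {z. poly (PP f g e) z = 0 \<and> 1 < cmod z}
                        = card {z. poly (PP f g e0) z = 0 \<and> 1 < cmod z}) (at e0 within S)"
proof -
  define A where "A = {z. poly (PP f g e0) z = 0}"
  have PPnz: "PP f g e \<noteq> 0" for e using PP_degree(2)[OF assms(4,2), of e] by auto
  have finA: "finite A" unfolding A_def by (rule poly_roots_finite[OF PPnz])
  have "eventually (\<lambda>\<delta>. \<delta> < 1/2 \<and> (\<forall>a\<in>A. \<forall>a'\<in>A. a \<noteq> a' \<longrightarrow> \<delta> < cmod (a - a') / 3)
          \<and> (\<forall>a\<in>A. cmod a \<noteq> 1 \<longrightarrow> \<delta> < \<bar>cmod a - 1\<bar>)) (at_right 0)"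
    by (intro eventually_conj ev_small eventually_ball_finite finA ballI ev_small_imp) auto
  then obtain b where b: "b > 0" "\<And>y. y > 0 \<Longrightarrow> y < b \<Longrightarrow> y < 1/2 \<and> (\<forall>a\<in>A. \<forall>a'\<in>A. a \<noteq> a' \<longrightarrow> y < cmod (a - a') / 3)
          \<and> (\<forall>a\<in>A. cmod a \<noteq> 1 \<longrightarrow> y < \<bar>cmod a - 1\<bar>)"
    unfolding eventually_at_right_field by auto
  define \<delta> where "\<delta> = b / 2"
  have dpos: "\<delta> > 0" using b by (simp add: \<delta>_def)
  from b(2)[of \<delta>] have dsmall: "\<delta> < 1/2"
    and sep: "\<And>a a'. a \<in> A \<Longrightarrow> a' \<in> A \<Longrightarrow> a \<noteq> a' \<Longrightarrow> 3 * \<delta> < cmod (a - a')"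
    and off: "\<And>a. a \<in> A \<Longrightarrow> cmod a \<noteq> 1 \<Longrightarrow> \<delta> < \<bar>cmod a - 1\<bar>"
    using b(1) by (auto simp: \<delta>_def mult.commute)
  have ev1: "eventually (\<lambda>e. \<forall>a\<in>A. \<exists>w. poly (PP f g e) w = 0 \<and> cmod (w - a) < \<delta>) (at e0 within S)"
    by (intro eventually_ball_finite finA ballI near_root assms(4,2) dpos) (simp add: A_def)
  have ev2: "eventually (\<lambda>e. e \<in> S) (at e0 within S)"
    by (simp add: eventually_at_filter)
  show ?thesis
  proof (rule eventually_mono[OF eventually_conj[OF ev1 ev2]])
    fix e assume "(\<forall>a\<in>A. \<exists>w. poly (PP f g e) w = 0 \<and> cmod (w - a) < \<delta>) \<and> e \<in> S"
    hence H: "\<forall>a\<in>A. \<exists>w. poly (PP f g e) w = 0 \<and> cmod (w - a) < \<delta>" and eS: "e \<in> S" by auto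
    define B where "B = {z. poly (PP f g e) z = 0}"
    have finB: "finite B" unfolding B_def by (rule poly_roots_finite[OF PPnz])
    have cardA: "card A = degree f" unfolding A_def
      using card_roots_rsq[of "PP f g e0"] simple e0S PP_degree[OF assms(4,2)] by simp
    have cardB: "card B = degree f" unfolding B_def
      using card_roots_rsq[of "PP f g e"] simple eS PP_degree[OF assms(4,2)] by simp
    from H obtain \<phi> where \<phi>: "\<And>a. a \<in> A \<Longrightarrow> poly (PP f g e) (\<phi> a) = 0 \<and> cmod (\<phi> a - a) < \<delta>"
      by metis
    have inj: "inj_on \<phi> A"
    proof (rule inj_onI)
      fix a a' assume aa: "a \<in> A" "a' \<in> A" "\<phi> a = \<phi> a'"
      have "cmod (a - a') \<le> cmod (\<phi> a - a) + cmod (\<phi> a' - a')"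
        using aa(3) norm_triangle_ineq4[of "\<phi> a - a" "\<phi> a' - a'"] by (simp add: norm_minus_commute)
      also have "\<dots> < 3 * \<delta>" using \<phi>[OF aa(1)] \<phi>[OF aa(2)] dpos by simp
      finally show "a = a'" using sep[OF aa(1,2)] by fastforce
    qed
    have imB: "\<phi> ` A = B"
    proof (rule card_subset_eq[OF finB])
      show "\<phi> ` A \<subseteq> B" using \<phi> by (auto simp: B_def)
      show "card (\<phi> ` A) = card B" using card_image[OF inj] cardA cardB by simp
    qed
    have key: "1 < cmod (\<phi> a) \<longleftrightarrow> 1 < cmod a" if aA: "a \<in> A" for a
    proof -
      have d: "cmod (\<phi> a - a) < \<delta>" using \<phi>[OF aA] by simp
      have t1: "cmod a - \<delta> < cmod (\<phi> a)" using d norm_triangle_ineq2[of a "\<phi> a"]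
        by (simp add: norm_minus_commute)
      have t2: "cmod (\<phi> a) < cmod a + \<delta>" using d norm_triangle_ineq2[of "\<phi> a" a] by simp
      consider "cmod a > 1" | "cmod a < 1" | "cmod a = 1" by linarith
      thus ?thesis
      proof cases
        case 1 thus ?thesis using off[OF aA] t1 by auto
      next
        case 2 thus ?thesis using off[OF aA] t2 by auto
      next
        case 3
        define bb where "bb = \<phi> a"
        have rb: "poly (PP f g e) bb = 0" using \<phi>[OF aA] by (simp add: bb_def)
        have b0: "bb \<noteq> 0" using PP_refl_root(1)[OF assms(1-4) rb] .
        have a0: "a \<noteq> 0" using 3 by auto
        have rb': "poly (PP f g e) (inverse (cnj bb)) = 0" using PP_refl_root(2)[OF assms(1-4) rb] .
        hence "inverse (cnj bb) \<in> \<phi> ` A" using imB by (simp add: B_def)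
        then obtain a' where a'A: "a' \<in> A" and a'e: "\<phi> a' = inverse (cnj bb)"
          by (metis imageE)
        have "of_real ((cmod a)\<^sup>2) = a * cnj a" by (rule complex_norm_square)
        hence acnj: "a * cnj a = 1" using 3 by simp
        hence ia: "inverse (cnj a) = a" using a0 by (intro inverse_unique) (simp add: mult.commute)
        have bbig: "cmod bb > 1/2" using t1 3 dsmall by (simp add: bb_def)
        have "inverse (cnj bb) - a = (cnj a - cnj bb) / (cnj bb * cnj a)"
          using a0 b0 ia by (subst ia[symmetric]) (simp add: field_simps)
        hence "cmod (inverse (cnj bb) - a) = cmod (a - bb) / cmod bb"
          using 3 by (simp add: norm_mult norm_divide flip: complex_cnj_diff)
        also have "\<dots> \<le> 2 * cmod (a - bb)"
        proof -
          have "cmod (a - bb) / cmod bb \<le> cmod (a - bb) / (1/2)"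
            by (rule divide_left_mono) (use bbig in auto)
          thus ?thesis by simp
        qed
        also have "\<dots> < 2 * \<delta>" using d by (simp add: bb_def norm_minus_commute)
        finally have e1: "cmod (\<phi> a' - a) < 2 * \<delta>" using a'e by simp
        have "cmod (a' - a) \<le> cmod (\<phi> a' - a') + cmod (\<phi> a' - a)"
          using norm_triangle_ineq4[of "\<phi> a' - a'" "\<phi> a' - a"] by (simp add: norm_minus_commute)
        also have "\<dots> < 3 * \<delta>" using \<phi>[OF a'A] e1 by simp
        finally have "a' = a" using sep[OF a'A aA] by fastforce
        hence "inverse (cnj bb) = bb" using a'e by (simp add: bb_def)
        hence "bb * cnj bb = inverse (cnj bb) * cnj bb" by simp
        also have "\<dots> = 1" using b0 by simp
        finally have "bb * cnj bb = 1" .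
        hence "of_real ((cmod bb)\<^sup>2) = (1::complex)" by (subst complex_norm_square) simp
        hence "(cmod bb)\<^sup>2 = 1" by (metis of_real_eq_1_iff)
        hence "cmod bb = 1" using norm_ge_zero[of bb] by (auto simp: power2_eq_1_iff)
        thus ?thesis using 3 by (simp add: bb_def)
      qed
    qed
    have "{z. poly (PP f g e) z = 0 \<and> 1 < cmod z} = \<phi> ` {z. poly (PP f g e0) z = 0 \<and> 1 < cmod z}"
    proof
      show "{z. poly (PP f g e) z = 0 \<and> 1 < cmod z} \<subseteq> \<phi> ` {z. poly (PP f g e0) z = 0 \<and> 1 < cmod z}"
      proof
        fix z assume z: "z \<in> {z. poly (PP f g e) z = 0 \<and> 1 < cmod z}"
        then obtain a where "a \<in> A" "z = \<phi> a" using imB by (auto simp: B_def)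
        thus "z \<in> \<phi> ` {z. poly (PP f g e0) z = 0 \<and> 1 < cmod z}" using key z by (auto simp: A_def)
      qed
      show "\<phi> ` {z. poly (PP f g e0) z = 0 \<and> 1 < cmod z} \<subseteq> {z. poly (PP f g e) z = 0 \<and> 1 < cmod z}"
        using key \<phi> by (auto simp: A_def)
    qed
    moreover have "card (\<phi> ` {z. poly (PP f g e0) z = 0 \<and> 1 < cmod z}) = card {z. poly (PP f g e0) z = 0 \<and> 1 < cmod z}"
      by (rule card_image, rule inj_on_subset[OF inj]) (auto simp: A_def)
    ultimately show "card {z. poly (PP f g e) z = 0 \<and> 1 < cmod z} = card {z. poly (PP f g e0) z = 0 \<and> 1 < cmod z}"
      by simp
  qed
qed

theorem lemma3:
  fixes f g :: "int poly" and k :: nat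
  assumes "reciprocal f" and "salem_poly f"
    and "degree g < degree f"
    and "reciprocal (f + g)"
    and "\<forall>\<epsilon>::real. 0 \<le> \<epsilon> \<and> \<epsilon> \<le> real k \<longrightarrow>
           only_simple_roots (map_poly of_int f + smult \<epsilon> (map_poly of_int g))"
  shows "reciprocal (f + smult (int k) g) \<and> salem_poly (f + smult (int k) g)"
proof -
  have lc: "lead_coeff f = 1" using assms(2) by (simp add: salem_poly_def)
  have simp1: "order z (PP f g e) = 1" if "e \<in> {0..real k}" "poly (PP f g e) z = 0" for e z
    using assms(5) that unfolding only_simple_roots_def PP_real by auto
  have rsq: "\<forall>e\<in>{0..real k}. rsquarefree (PP f g e)"
  proof
    fix e assume e: "e \<in> {0..real k}"
    have nz: "PP f g e \<noteq> 0" using PP_degree(2)[OF lc assms(3), of e] by auto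
    show "rsquarefree (PP f g e)" unfolding rsquarefree_def
    proof (intro conjI nz allI)
      fix a show "order a (PP f g e) = 0 \<or> order a (PP f g e) = 1"
        using simp1[OF e, of a] order_root[of "PP f g e" a] nz by auto
    qed
  qed
  define Out where "Out e = {z. poly (PP f g e) z = 0 \<and> 1 < cmod z}" for e
  have const: "card (Out 0) = card (Out e)" if "e \<in> {0..real k}" for e
  proof (rule connected_local_const[where f="\<lambda>e. card (Out e)"])
    show "connected {0..real k}" by simp
    show "0 \<in> {0..real k}" by simp
    show "e \<in> {0..real k}" by fact
    show "\<forall>a\<in>{0..real k}. \<forall>\<^sub>F b in at a within {0..real k}. card (Out a) = card (Out b)"
    proof
      fix a assume "a \<in> {0..real k}"
      from local_const[OF assms(1,3,4) lc rsq this]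
      show "\<forall>\<^sub>F b in at a within {0..real k}. card (Out a) = card (Out b)"
        unfolding Out_def by (rule eventually_mono) simp
    qed
  qed
  have PP0: "PP f g 0 = map_poly of_int f" by (simp add: PP_def)
  obtain z0 where z0: "poly (map_poly of_int f) z0 = 0 \<and> 1 < cmod z0"
    "\<And>z. poly (map_poly of_int f) z = (0::complex) \<and> 1 < cmod z \<Longrightarrow> z = z0"
  proof -
    have "\<exists>!z::complex. poly (map_poly of_int f) z = 0 \<and> 1 < cmod z"
      using assms(2) by (simp add: salem_poly_def)
    then obtain z1 where "poly (map_poly of_int f) z1 = (0::complex) \<and> 1 < cmod z1"
      "\<And>z. poly (map_poly of_int f) z = (0::complex) \<and> 1 < cmod z \<Longrightarrow> z = z1"
      by (elim ex1E) blast
    thus ?thesis by (rule that)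
  qed
  have "Out 0 = {z0}"
  proof (intro equalityI subsetI)
    fix z assume "z \<in> Out 0"
    hence "poly (map_poly of_int f) z = (0::complex) \<and> 1 < cmod z" by (simp add: Out_def PP0)
    thus "z \<in> {z0}" using z0(2) by simp
  next
    fix z assume "z \<in> {z0}"
    thus "z \<in> Out 0" using z0(1) by (simp add: Out_def PP0)
  qed
  hence "card (Out (real k)) = 1" using const[of "real k"] by simp
  then obtain w where w: "Out (real k) = {w}" by (rule card_1_singletonE)
  have degk: "degree (f + smult (int k) g) = degree f"
    using assms(3) degree_smult_le[of "int k" g] by (intro degree_add_eq_left) simp
  have lck: "lead_coeff (f + smult (int k) g) = 1"
    using degk lc assms(3) by (simp add: coeff_eq_0)
  have rec: "reciprocal (f + smult (int k) g)"
    unfolding reciprocal_def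
  proof (intro conjI allI impI)
    show "f + smult (int k) g \<noteq> 0"
    proof
      assume h: "f + smult (int k) g = 0"
      show False using lck unfolding h by simp
    qed
  next
    fix i assume "i \<le> degree (f + smult (int k) g)"
    hence i: "i \<le> degree f" using degk by simp
    show "coeff (f + smult (int k) g) i = coeff (f + smult (int k) g) (degree (f + smult (int k) g) - i)"
    proof -
      have "coeff f i = coeff f (degree f - i)" using assms(1) i unfolding reciprocal_def by blast
      moreover have "coeff g i = coeff g (degree f - i)" by (rule g_sym[OF assms(1,3,4) i])
      ultimately show ?thesis unfolding degk by simp
    qed
  qed
  have sal: "salem_poly (f + smult (int k) g)"
    unfolding salem_poly_def PP_int
  proof (intro conjI lck)
    show "\<exists>!z. poly (PP f g (real k)) z = 0 \<and> 1 < cmod z"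
    proof (rule ex1I[of _ w])
      show "poly (PP f g (real k)) w = 0 \<and> 1 < cmod w" using w unfolding Out_def by blast
      fix z assume "poly (PP f g (real k)) z = 0 \<and> 1 < cmod z"
      hence "z \<in> Out (real k)" unfolding Out_def by blast
      thus "z = w" using w by blast
    qed
    show "\<forall>z. poly (PP f g (real k)) z = 0 \<and> 1 < cmod z \<longrightarrow> order z (PP f g (real k)) = 1"
      using simp1[of "real k"] by auto
  qed
  show ?thesis using rec sal by simp
qed

end
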